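(* Let $\mu_0\in\mathbb{C}$ and let $\xi=(\mu_0+z^2)\partial_z+(\bar\mu_0+\bar z^2)\partial_{\bar z}$ be a GCKV in canonical form. The subgroup of $SL(2,\mathbb{C})$ consisting of those $\mathbb{A}$ with $\chi^{\mathbb{A}}_\star(\xi)=\xi$ is $$\mathbb{A}_{\mu_0}=\left\{\begin{pmatrix}\delta&-\gamma\mu_0\\ \gamma&\delta\end{pmatrix}:\ \gamma,\delta\in\mathbb{C},\ \delta^2+\mu_0\gamma^2=1\right\}.$$
   Context: $\mathbb{E}^2$ is the Euclidean plane with Cartesian coordinates $\{x,y\}$ and $z=\frac12(x-iy)$. A GCKV with parameters $\mu\in\mathbb{C}^3$ is $(\mu_0+\mu_1z+\frac12\mu_2z^2)\partial_z+\text{c.c.}$; it is canonical when $\mu_1=0,\mu_2=2$. For $\mathbb{A}=\begin{pmatrix}\alpha&\beta\\ \gamma&\delta\end{pmatrix}\in SL(2,\mathbb{C})$, $\chi^{\mathbb{A}}$ is the Möbius transformation $z\mapsto(\alpha z+\beta)/(\gamma z+\delta)$ and $\chi^{\mathbb{A}}_\star$ denotes push-forward of vector fields (the push-forward of a GCKV is again a GCKV). *)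

theory Defs
  imports "HOL-Analysis.Analysis"
begin

definition mobius :: "complex^2^2 \<Rightarrow> complex \<Rightarrow> complex" where
  "mobius A z = (A$1$1 * z + A$1$2) / (A$2$1 * z + A$2$2)"

text \<open>Holomorphic coefficient of the GCKV with parameters (mu0, mu1, mu2):
  xi = (mu0 + mu1 z + mu2/2 z^2) d/dz + c.c.\<close>
definition gckv_coeff :: "complex \<Rightarrow> complex \<Rightarrow> complex \<Rightarrow> complex \<Rightarrow> complex" where
  "gckv_coeff m0 m1 m2 z = m0 + m1 * z + (m2 / 2) * z^2"

text \<open>chi^A_* xi = xi for xi = f d/dz + c.c.: at every point w = chi^A(z) of the plane
  the push-forward vector (chi^A)'(z) f(z) equals f(w). The antiholomorphic
  part is the complex conjugate of this identity.\<close>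
definition pushforward_fixes :: "complex^2^2 \<Rightarrow> (complex \<Rightarrow> complex) \<Rightarrow> bool" where
  "pushforward_fixes A f \<longleftrightarrow>
     (\<forall>z. A$2$1 * z + A$2$2 \<noteq> 0 \<longrightarrow> f (mobius A z) = deriv (mobius A) z * f z)"

end

theory Submission
  imports Defs "HOL-Computational_Algebra.Polynomial"
begin

lemma quad_zero:
  fixes p0 p1 p2 z0 :: complex
  assumes "\<And>z. z \<noteq> z0 \<Longrightarrow> p2 * z^2 + p1 * z + p0 = 0"
  shows "p0 = 0 \<and> p1 = 0 \<and> p2 = 0"
proof -
  let ?p = "[:p0, p1, p2:]"
  have ev: "poly ?p z = p2 * z^2 + p1 * z + p0" for z
    by (simp add: algebra_simps power2_eq_square)
  have "UNIV - {z0} \<subseteq> {x. poly ?p x = 0}"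
  proof
    fix x assume "x \<in> UNIV - {z0}"
    thus "x \<in> {x. poly ?p x = 0}" using assms[of x] ev[of x] by simp
  qed
  moreover have "infinite (UNIV - {z0} :: complex set)"
    by (simp add: infinite_UNIV_char_0)
  ultimately have "infinite {x. poly ?p x = 0}" using finite_subset by blast
  hence "?p = 0" using poly_roots_finite by blast
  thus ?thesis by simp
qed

lemma mob_deriv:
  assumes "A$2$1 * z + A$2$2 \<noteq> 0"
  shows "deriv (mobius A) z = (A$1$1 * (A$2$1 * z + A$2$2) - A$2$1 * (A$1$1 * z + A$1$2)) / (A$2$1 * z + A$2$2)^2"
proof -
  have "(mobius A has_field_derivative (A$1$1 * (A$2$1 * z + A$2$2) - A$2$1 * (A$1$1 * z + A$1$2)) / (A$2$1 * z + A$2$2)^2) (at z)"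
    unfolding mobius_def[abs_def]
    by (rule derivative_eq_intros refl | use assms in \<open>simp add: power2_eq_square\<close>)+
  thus ?thesis by (rule DERIV_imp_deriv)
qed

theorem corollary7p3:
  fixes \<mu>0 :: complex
  shows "{A :: complex^2^2. det A = 1 \<and> pushforward_fixes A (gckv_coeff \<mu>0 0 2)} =
         {A. \<exists>\<gamma> \<delta> :: complex. \<delta>^2 + \<mu>0 * \<gamma>^2 = 1 \<and>
              A = vector [vector [\<delta>, - \<gamma> * \<mu>0], vector [\<gamma>, \<delta>]]}"
proof (intro set_eqI iffI; simp only: mem_Collect_eq)
  fix A :: "complex^2^2"
  assume h: "det A = 1 \<and> pushforward_fixes A (gckv_coeff \<mu>0 0 2)"
  define a where "a = A$1$1"
  define b where "b = A$1$2"
  define c where "c = A$2$1"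
  define d where "d = A$2$2"
  have det: "a*d - b*c = 1" using h by (simp add: det_2 a_def b_def c_def d_def)
  have cd: "c \<noteq> 0 \<or> d \<noteq> 0" using det by auto
  have eq: "(a*z+b)^2 + \<mu>0*(c*z+d)^2 = \<mu>0 + z^2" if nz: "c*z+d \<noteq> 0" for z
  proof -
    have "gckv_coeff \<mu>0 0 2 (mobius A z) = deriv (mobius A) z * gckv_coeff \<mu>0 0 2 z"
      using h nz unfolding pushforward_fixes_def c_def d_def by blast
    also have "deriv (mobius A) z = 1 / (c*z+d)^2"
      using mob_deriv[of A z] nz det unfolding a_def b_def c_def d_def
      by (simp add: algebra_simps)
    finally have "\<mu>0 + (a*z+b)^2/(c*z+d)^2 = (\<mu>0 + z^2) / (c*z+d)^2"
      by (simp add: gckv_coeff_def mobius_def a_def b_def c_def d_def power_divide)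
    moreover have D: "(c*z+d)^2 \<noteq> 0" using nz by simp
    ultimately have "(\<mu>0 + (a*z+b)^2/(c*z+d)^2) * (c*z+d)^2 = (\<mu>0 + z^2)"
      by simp
    thus ?thesis using D by (simp add: distrib_right algebra_simps)
  qed
  have P: "(a^2 + \<mu>0*c^2 - 1) * z^2 + (2*a*b + 2*\<mu>0*c*d) * z + (b^2 + \<mu>0*d^2 - \<mu>0) = 0"
    if "z \<noteq> -d/c" for z
  proof -
    have "c*z+d \<noteq> 0"
    proof
      assume "c*z+d = 0"
      with cd that show False by (cases "c = 0") (auto simp: field_simps add_eq_0_iff)
    qed
    from eq[OF this] show ?thesis by (simp add: algebra_simps power2_eq_square)
  qed
  note q = quad_zero[OF P]
  have e1: "a^2 + \<mu>0*c^2 = 1" using q by simp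
  have e2: "a*b + \<mu>0*c*d = 0"
  proof -
    have "2*(a*b + \<mu>0*c*d) = 0" using q by (simp add: algebra_simps)
    thus ?thesis by (subst (asm) mult_eq_0_iff) simp
  qed
  have e3: "b^2 + \<mu>0*d^2 = \<mu>0" using q by simp
  have ad: "a = d"
  proof -
    have "a = a*(a*d - b*c)" using det by simp
    also have "\<dots> = d*(a^2 + \<mu>0*c^2) - c*(a*b + \<mu>0*c*d)" by (simp add: algebra_simps power2_eq_square)
    finally show ?thesis using e1 e2 by simp
  qed
  have bc: "b = - c * \<mu>0"
  proof -
    have "b = b*(a*d - b*c)" using det by simp
    also have "\<dots> = d*(a*b + \<mu>0*c*d) - c*(b^2 + \<mu>0*d^2)" by (simp add: algebra_simps power2_eq_square)
    finally show ?thesis using e2 e3 by simp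
  qed
  show "\<exists>\<gamma> \<delta> :: complex. \<delta>^2 + \<mu>0 * \<gamma>^2 = 1 \<and>
              A = vector [vector [\<delta>, - \<gamma> * \<mu>0], vector [\<gamma>, \<delta>]]"
  proof (intro exI conjI)
    show "d^2 + \<mu>0 * c^2 = 1" using e1 ad by simp
    show "A = vector [vector [d, - c * \<mu>0], vector [c, d]]"
      unfolding vec_eq_iff forall_2 using ad bc by (simp add: a_def b_def c_def d_def)
  qed
next
  fix A :: "complex^2^2"
  assume "\<exists>\<gamma> \<delta> :: complex. \<delta>^2 + \<mu>0 * \<gamma>^2 = 1 \<and>
              A = vector [vector [\<delta>, - \<gamma> * \<mu>0], vector [\<gamma>, \<delta>]]"
  then obtain c d where e: "d^2 + \<mu>0 * c^2 = 1"
    and A: "A = vector [vector [d, - c * \<mu>0], vector [c, d]]" by blast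
  have ent: "A$1$1 = d" "A$1$2 = - c * \<mu>0" "A$2$1 = c" "A$2$2 = d" using A by simp_all
  have "det A = 1" using e by (simp add: det_2 ent power2_eq_square algebra_simps)
  moreover have "pushforward_fixes A (gckv_coeff \<mu>0 0 2)"
    unfolding pushforward_fixes_def
  proof (intro allI impI)
    fix z assume nz: "A$2$1 * z + A$2$2 \<noteq> 0"
    hence nz': "c*z+d \<noteq> 0" by (simp add: ent)
    have dv: "deriv (mobius A) z = 1 / (c*z+d)^2"
      using mob_deriv[OF nz] e by (simp add: ent algebra_simps power2_eq_square)
    have "(d*z - c*\<mu>0)^2 + \<mu>0*(c*z+d)^2 = (\<mu>0 + z^2) * (d^2 + \<mu>0*c^2)"
      by (simp add: algebra_simps power2_eq_square)
    hence key: "(d*z - c*\<mu>0)^2 + \<mu>0*(c*z+d)^2 = \<mu>0 + z^2" using e by simp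
    show "gckv_coeff \<mu>0 0 2 (mobius A z) = deriv (mobius A) z * gckv_coeff \<mu>0 0 2 z"
    proof -
      have D: "(c*z+d)^2 \<noteq> 0" using nz' by simp
      have "gckv_coeff \<mu>0 0 2 (mobius A z) = \<mu>0 + (d*z - c*\<mu>0)^2/(c*z+d)^2"
        by (simp add: gckv_coeff_def mobius_def ent power_divide)
      also have "\<dots> = (\<mu>0*(c*z+d)^2 + (d*z - c*\<mu>0)^2)/(c*z+d)^2"
        using D by (simp add: add_divide_distrib)
      also have "\<dots> = (\<mu>0 + z^2)/(c*z+d)^2" using key by (simp add: add.commute)
      also have "\<dots> = deriv (mobius A) z * gckv_coeff \<mu>0 0 2 z"
        by (simp add: dv gckv_coeff_def)
      finally show ?thesis .
    qed
  qed
  ultimately show "det A = 1 \<and> pushforward_fixes A (gckv_coeff \<mu>0 0 2)" by blast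
qed

end
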